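(* Let a Riemann-Cartan geometry on a 4-manifold admit a one-dimensional group of affine frame symmetries generated by $\mathbf X$, and choose local coordinates $x^\mu=(x^{\tilde\alpha},\chi)$, $\tilde\alpha=1,2,3$, with $\mathbf X=\partial_\chi$, and $\mathcal L_{\mathbf X}\mathbf h^a=f(\chi)\lambda^a{}_b\mathbf h^b$ for a fixed Lorentz algebra element $\lambda$ (which, up to global Lorentz transformations, is one of $\mathbf h^1\wedge\mathbf h^4$, $\mathbf h^1\wedge\mathbf h^2+\mathbf h^2\wedge\mathbf h^4$, $\mathbf h^1\wedge\mathbf h^4+a_0\mathbf h^2\wedge\mathbf h^4$ ($a_0\in\mathbb R$ constant), $\mathbf h^2\wedge\mathbf h^3$, read as the two-form $\lambda_{ab}$, or zero). Then, after a local Lorentz transformation of the frame, the coframe and connection take the form $$\mathbf h^a=h^a{}_\alpha(x^{\tilde\alpha})\,dx^\alpha,\qquad \boldsymbol\omega^a{}_b=W^a{}_{bc}(x^{\tilde\alpha})\,\mathbf h^c-\mathbf h_c(\epsilon\chi)\,\lambda^a{}_b\,\mathbf h^c,$$ where the $h^a{}_\alpha$ and $W^a{}_{bc}$ (with $W_{abc}=-W_{bac}$) are functions independent of $\chi$ and $\epsilon\in\{0,1\}$; conversely every such pair admits $\partial_\chi$ as an affine frame symmetry. The case $\epsilon=0$ corresponds to a translational symmetry and $\epsilon=1$ to an isotropy.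
   Context: A Riemann-Cartan geometry: orthonormal coframe $\mathbf h^a=h^a{}_\mu dx^\mu$, dual frame $\mathbf h_a=h_a{}^\mu\partial_\mu$, metric $g=\eta_{ab}\mathbf h^a\mathbf h^b$ with $\eta=\mathrm{diag}(-1,1,1,1)$, metric-compatible connection one-form $\boldsymbol\omega^a{}_b=\omega^a{}_{bc}\mathbf h^c$ with $\omega_{abc}=-\omega_{bac}$. $\mathbf h_c(F)=h_c{}^\mu\partial_\mu F$. An affine frame symmetry is a vector field $\mathbf X$ with $\mathcal L_{\mathbf X}\mathbf h^a=\Lambda^a{}_b\mathbf h^b$ for some Lorentz-algebra-valued $\Lambda=f\lambda$ and $\mathcal L_{\mathbf X}\omega^a{}_{bc}=X^d\mathbf h_d(\omega^a{}_{bc})+\omega^d{}_{bc}\Lambda^a{}_d-\omega^a{}_{dc}\Lambda^d{}_b-\omega^a{}_{bd}\Lambda^d{}_c-\mathbf h_c(f)\lambda^a{}_b=0$. Under a local Lorentz transformation $\tilde{\mathbf h}^a=\Lambda^a{}_b\mathbf h^b$ the connection transforms as $\tilde{\boldsymbol\omega}=\Lambda\boldsymbol\omega\Lambda^{-1}+\Lambda\,d\Lambda^{-1}$. *)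

theory Defs
  imports "HOL-Analysis.Analysis"
begin

(* Local coordinates x = (x^0,x^1,x^2,x^3) :: real^4; the coordinate chi is x$3.
   Frame indices a :: 4, with eta = diag(-1,1,1,1) (index 0 timelike).
   A coframe is h :: real^4 => real^4^4 with  h x $ a $ mu = h^a_mu(x).
   A connection is given by its frame components  w x a b c = omega^a_{bc}(x). *)

definition eta :: "real^4^4" where
  "eta = (\<chi> i j. if i = j then (if i = 0 then -1 else 1) else 0)"

definition lorentz_alg :: "real^4^4 \<Rightarrow> bool" where
  "lorentz_alg l \<longleftrightarrow> transpose (eta ** l) = - (eta ** l)"

definition lorentz_mat :: "real^4^4 \<Rightarrow> bool" where
  "lorentz_mat L \<longleftrightarrow> transpose L ** eta ** L = eta"

definition pd :: "(real^4 \<Rightarrow> real) \<Rightarrow> 4 \<Rightarrow> real^4 \<Rightarrow> real" where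
  "pd F mu x = deriv (\<lambda>t. F (x + t *\<^sub>R axis mu 1)) 0"

(* dual frame: dual h x $ mu $ a = h_a^mu(x) *)
definition dual :: "(real^4 \<Rightarrow> real^4^4) \<Rightarrow> real^4 \<Rightarrow> real^4^4" where
  "dual h x = matrix_inv (h x)"

definition frame_deriv :: "(real^4 \<Rightarrow> real^4^4) \<Rightarrow> (real^4 \<Rightarrow> real) \<Rightarrow> 4 \<Rightarrow> real^4 \<Rightarrow> real" where
  "frame_deriv h F c x = (\<Sum>mu\<in>UNIV. dual h x $ mu $ c * pd F mu x)"

definition lower :: "(real^4 \<Rightarrow> 4 \<Rightarrow> 4 \<Rightarrow> 4 \<Rightarrow> real) \<Rightarrow> real^4 \<Rightarrow> 4 \<Rightarrow> 4 \<Rightarrow> 4 \<Rightarrow> real" where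
  "lower w x a b c = (\<Sum>e\<in>UNIV. eta $ a $ e * w x e b c)"

definition lie_coframe :: "(real^4 \<Rightarrow> real^4) \<Rightarrow> (real^4 \<Rightarrow> real^4^4) \<Rightarrow> real^4 \<Rightarrow> real^4^4" where
  "lie_coframe X h x = (\<chi> a mu. (\<Sum>nu\<in>UNIV. X x $ nu * pd (\<lambda>y. h y $ a $ mu) nu x)
                                + (\<Sum>nu\<in>UNIV. h x $ a $ nu * pd (\<lambda>y. X y $ nu) mu x))"

(* The connection part of the affine frame symmetry condition with Lambda = f lambda,
   written with the sign of Lambda consistent with L_X h^a = Lambda^a_b h^b and the
   stated transformation law of omega. *)
definition lie_conn :: "(real^4 \<Rightarrow> real^4) \<Rightarrow> (real^4 \<Rightarrow> real^4^4) \<Rightarrow> (real^4 \<Rightarrow> 4 \<Rightarrow> 4 \<Rightarrow> 4 \<Rightarrow> real)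
     \<Rightarrow> (real^4 \<Rightarrow> real) \<Rightarrow> real^4^4 \<Rightarrow> real^4 \<Rightarrow> 4 \<Rightarrow> 4 \<Rightarrow> 4 \<Rightarrow> real" where
  "lie_conn X h w f l x a b c =
     (\<Sum>mu\<in>UNIV. X x $ mu * pd (\<lambda>y. w y a b c) mu x)
     - (\<Sum>d\<in>UNIV. f x * l $ a $ d * w x d b c)
     + (\<Sum>d\<in>UNIV. w x a d c * (f x * l $ d $ b))
     + (\<Sum>d\<in>UNIV. w x a b d * (f x * l $ d $ c))
     + frame_deriv h f c x * l $ a $ b"

definition affine_frame_symmetry ::
  "(real^4) set \<Rightarrow> (real^4 \<Rightarrow> real^4^4) \<Rightarrow> (real^4 \<Rightarrow> 4 \<Rightarrow> 4 \<Rightarrow> 4 \<Rightarrow> real)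
     \<Rightarrow> (real^4 \<Rightarrow> real^4) \<Rightarrow> (real^4 \<Rightarrow> real) \<Rightarrow> real^4^4 \<Rightarrow> bool" where
  "affine_frame_symmetry D h w X f l \<longleftrightarrow>
     lorentz_alg l
     \<and> (\<forall>x\<in>D. lie_coframe X h x = f x *\<^sub>R (l ** h x))
     \<and> (\<forall>x\<in>D. \<forall>a b c. lie_conn X h w f l x a b c = 0)"

definition coord_conn :: "(real^4 \<Rightarrow> real^4^4) \<Rightarrow> (real^4 \<Rightarrow> 4 \<Rightarrow> 4 \<Rightarrow> 4 \<Rightarrow> real) \<Rightarrow> real^4 \<Rightarrow> 4 \<Rightarrow> real^4^4" where
  "coord_conn h w x mu = (\<chi> a b. \<Sum>c\<in>UNIV. w x a b c * h x $ c $ mu)"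

(* local Lorentz transformation: h~ = L h, omega~ = L omega L^-1 + L d(L^-1),
   returned in frame components w.r.t. the new frame h~ *)
definition gauge_coframe :: "(real^4 \<Rightarrow> real^4^4) \<Rightarrow> (real^4 \<Rightarrow> real^4^4) \<Rightarrow> real^4 \<Rightarrow> real^4^4" where
  "gauge_coframe L h x = L x ** h x"

definition gauge_conn :: "(real^4 \<Rightarrow> real^4^4) \<Rightarrow> (real^4 \<Rightarrow> real^4^4) \<Rightarrow> (real^4 \<Rightarrow> 4 \<Rightarrow> 4 \<Rightarrow> 4 \<Rightarrow> real)
     \<Rightarrow> real^4 \<Rightarrow> 4 \<Rightarrow> 4 \<Rightarrow> 4 \<Rightarrow> real" where
  "gauge_conn L h w x a b c =
     (\<Sum>mu\<in>UNIV. ((L x ** coord_conn h w x mu ** matrix_inv (L x)) $ a $ b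
                   + (\<Sum>d\<in>UNIV. L x $ a $ d * pd (\<lambda>y. matrix_inv (L y) $ d $ b) mu x))
                 * dual (gauge_coframe L h) x $ mu $ c)"

definition chi_shift :: "real^4 \<Rightarrow> real \<Rightarrow> real^4" where
  "chi_shift x t = x + t *\<^sub>R axis 3 1"

definition chi_indep :: "(real^4) set \<Rightarrow> (real^4 \<Rightarrow> 'b) \<Rightarrow> bool" where
  "chi_indep D F \<longleftrightarrow> (\<forall>x\<in>D. \<forall>t. chi_shift x t \<in> D \<longrightarrow> F (chi_shift x t) = F x)"

end

theory Submission
  imports Defs
begin

definition mderiv :: "(real \<Rightarrow> real^'n^'m) \<Rightarrow> real^'n^'m \<Rightarrow> real \<Rightarrow> bool" where
  "mderiv A A' t \<longleftrightarrow> (\<forall>i j. ((\<lambda>s. A s $ i $ j) has_real_derivative A' $ i $ j) (at t))"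

lemma mderiv_mult:
  fixes A :: "real \<Rightarrow> real^'n^'m" and B :: "real \<Rightarrow> real^'p^'n"
  assumes "mderiv A A' t" "mderiv B B' t"
  shows "mderiv (\<lambda>s. A s ** B s) (A' ** B t + A t ** B') t"
  unfolding mderiv_def
proof (intro allI)
  fix i j
  have "((\<lambda>s. \<Sum>k\<in>UNIV. A s $ i $ k * B s $ k $ j) has_real_derivative
          (\<Sum>k\<in>UNIV. A' $ i $ k * B t $ k $ j + A t $ i $ k * B' $ k $ j)) (at t)"
  proof (rule DERIV_sum)
    fix k
    have a: "((\<lambda>s. A s $ i $ k) has_real_derivative A' $ i $ k) (at t)"
      and b: "((\<lambda>s. B s $ k $ j) has_real_derivative B' $ k $ j) (at t)"
      using assms unfolding mderiv_def by auto
    show "((\<lambda>s. A s $ i $ k * B s $ k $ j) has_real_derivative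
          A' $ i $ k * B t $ k $ j + A t $ i $ k * B' $ k $ j) (at t)"
      using DERIV_mult'[OF a b] by (simp add: add.commute)
  qed
  then show "((\<lambda>s. (A s ** B s) $ i $ j) has_real_derivative (A' ** B t + A t ** B') $ i $ j) (at t)"
    by (simp add: matrix_matrix_mult_def sum.distrib)
qed

lemma mderiv_add:
  assumes "mderiv A A' t" "mderiv B B' t"
  shows "mderiv (\<lambda>s. A s + B s) (A' + B') t"
  using assms unfolding mderiv_def by (simp add: DERIV_add)

lemma mderiv_diff:
  assumes "mderiv A A' t" "mderiv B B' t"
  shows "mderiv (\<lambda>s. A s - B s) (A' - B') t"
  using assms unfolding mderiv_def by (simp add: DERIV_diff)

lemma mderiv_scale:
  assumes "(\<phi> has_real_derivative p) (at t)" "mderiv A A' t"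
  shows "mderiv (\<lambda>s. \<phi> s *\<^sub>R A s) (p *\<^sub>R A t + \<phi> t *\<^sub>R A') t"
  using assms unfolding mderiv_def
  by (auto intro!: DERIV_mult[THEN DERIV_cong] simp: algebra_simps)

lemma mderiv_const: "mderiv (\<lambda>s. C) 0 t"
  unfolding mderiv_def by simp

lemma mderiv_transpose:
  assumes "mderiv A A' t"
  shows "mderiv (\<lambda>s. transpose (A s)) (transpose A') t"
  using assms unfolding mderiv_def transpose_def by simp

lemma mderiv_chain:
  assumes "mderiv A A' (\<phi> t)" "(\<phi> has_real_derivative p) (at t)"
  shows "mderiv (\<lambda>s. A (\<phi> s)) (p *\<^sub>R A') t"
  unfolding mderiv_def
proof (intro allI)
  fix i j
  have "((\<lambda>s. A s $ i $ j) has_real_derivative A' $ i $ j) (at (\<phi> t))"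
    using assms(1) unfolding mderiv_def by blast
  from DERIV_chain2[OF this assms(2)]
  show "((\<lambda>s. A (\<phi> s) $ i $ j) has_real_derivative (p *\<^sub>R A') $ i $ j) (at t)"
    by (simp add: mult.commute)
qed

lemma mderiv_cong: "mderiv A A' t \<Longrightarrow> A' = B' \<Longrightarrow> mderiv A B' t" by simp

lemma mderiv_zero_const:
  assumes "convex S" "\<And>t. t \<in> S \<Longrightarrow> mderiv A 0 t" "s \<in> S" "t \<in> S"
  shows "A s = A t"
proof -
  have "A s $ i $ j = A t $ i $ j" for i j
  proof -
    have d: "((\<lambda>s. A s $ i $ j) has_real_derivative 0) (at x within S)" if "x \<in> S" for x
    proof -
      have "((\<lambda>s. A s $ i $ j) has_real_derivative 0 $ i $ j) (at x)"
        using assms(2)[OF that] unfolding mderiv_def by blast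
      then show ?thesis by (simp add: has_field_derivative_at_within)
    qed
    obtain c where "\<And>x. x \<in> S \<Longrightarrow> A x $ i $ j = c"
      using has_field_derivative_zero_constant[OF assms(1) d] by blast
    then show ?thesis using assms by auto
  qed
  then show ?thesis by (simp add: vec_eq_iff)
qed

lemma matrix_mul_uminus_right [simp]: "(A::real^'n^'m) ** (- B) = - (A ** B)"
  by (simp add: vec_eq_iff matrix_matrix_mult_def sum_negf)

lemma matrix_mul_uminus_left [simp]: "(- A::real^'n^'m) ** B = - (A ** B)"
  by (simp add: vec_eq_iff matrix_matrix_mult_def sum_negf)

definition mpow :: "real^'n^'n \<Rightarrow> nat \<Rightarrow> real^'n^'n" where
  "mpow l n = ((\<lambda>M. l ** M) ^^ n) (mat 1)"

lemma mpow_0 [simp]: "mpow l 0 = mat 1" by (simp add: mpow_def)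
lemma mpow_Suc: "mpow l (Suc n) = l ** mpow l n" by (simp add: mpow_def)
lemma mpow_Suc': "mpow l (Suc n) = mpow l n ** l"
  by (induction n) (simp_all add: mpow_Suc matrix_mul_assoc)

definition mbound :: "real^'n^'n \<Rightarrow> real" where
  "mbound l = (\<Sum>i\<in>UNIV. \<Sum>k\<in>UNIV. \<bar>l $ i $ k\<bar>)"

lemma mbound_nonneg: "0 \<le> mbound l"
  unfolding mbound_def by (intro sum_nonneg) auto

lemma row_le_mbound: "(\<Sum>k\<in>UNIV. \<bar>l $ i $ k\<bar>) \<le> mbound l"
  unfolding mbound_def
  by (rule member_le_sum[of i UNIV "\<lambda>i. \<Sum>k\<in>UNIV. \<bar>l $ i $ k\<bar>"]) (auto intro: sum_nonneg)

lemma mpow_bound: "\<bar>mpow l n $ i $ j\<bar> \<le> mbound l ^ n"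
proof (induction n arbitrary: i j)
  case 0
  then show ?case by (simp add: mat_def)
next
  case (Suc n)
  have "\<bar>mpow l (Suc n) $ i $ j\<bar> = \<bar>\<Sum>k\<in>UNIV. l $ i $ k * mpow l n $ k $ j\<bar>"
    by (simp add: mpow_Suc matrix_matrix_mult_def)
  also have "\<dots> \<le> (\<Sum>k\<in>UNIV. \<bar>l $ i $ k\<bar> * \<bar>mpow l n $ k $ j\<bar>)"
    by (rule order_trans[OF sum_abs]) (simp add: abs_mult)
  also have "\<dots> \<le> (\<Sum>k\<in>UNIV. \<bar>l $ i $ k\<bar> * mbound l ^ n)"
    by (intro sum_mono mult_left_mono Suc.IH) auto
  also have "\<dots> = (\<Sum>k\<in>UNIV. \<bar>l $ i $ k\<bar>) * mbound l ^ n"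
    by (simp add: sum_distrib_right)
  also have "\<dots> \<le> mbound l * mbound l ^ n"
    by (intro mult_right_mono row_le_mbound) (simp add: mbound_nonneg)
  finally show ?case by simp
qed

lemma mpow_summable: "summable (\<lambda>n. (M ** mpow l n) $ i $ j / fact n * y ^ n)"
proof (rule summable_comparison_test')
  let ?K = "(\<Sum>k\<in>UNIV. \<bar>M $ i $ k\<bar>)"
  show "summable (\<lambda>n. ?K * (inverse (fact n) * (mbound l * \<bar>y\<bar>) ^ n))"
    by (intro summable_mult summable_exp)
  fix n :: nat assume "n \<ge> 0"
  have "\<bar>(M ** mpow l n) $ i $ j\<bar> \<le> ?K * mbound l ^ n"
  proof -
    have "\<bar>(M ** mpow l n) $ i $ j\<bar> = \<bar>\<Sum>k\<in>UNIV. M $ i $ k * mpow l n $ k $ j\<bar>"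
      by (simp add: matrix_matrix_mult_def)
    also have "\<dots> \<le> (\<Sum>k\<in>UNIV. \<bar>M $ i $ k\<bar> * \<bar>mpow l n $ k $ j\<bar>)"
      by (rule order_trans[OF sum_abs]) (simp add: abs_mult)
    also have "\<dots> \<le> (\<Sum>k\<in>UNIV. \<bar>M $ i $ k\<bar> * mbound l ^ n)"
      by (intro sum_mono mult_left_mono mpow_bound) auto
    finally show ?thesis by (simp add: sum_distrib_right)
  qed
  then have "\<bar>(M ** mpow l n) $ i $ j\<bar> * \<bar>y\<bar> ^ n / fact n \<le> ?K * mbound l ^ n * \<bar>y\<bar> ^ n / fact n"
    by (intro divide_right_mono mult_right_mono) auto
  then show "norm ((M ** mpow l n) $ i $ j / fact n * y ^ n) \<le> ?K * (inverse (fact n) * (mbound l * \<bar>y\<bar>) ^ n)"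
    by (simp add: abs_mult power_abs power_mult_distrib field_simps)
qed

definition mexp :: "real^'n^'n \<Rightarrow> real \<Rightarrow> real^'n^'n" where
  "mexp l s = (\<chi> i j. \<Sum>n. mpow l n $ i $ j / fact n * s ^ n)"

lemma mpow_summable1: "summable (\<lambda>n. mpow l n $ i $ j / fact n * y ^ n)"
  using mpow_summable[of "mat 1" l i j y] by simp

lemma mexp_mult_left:
  "(M ** mexp l s) $ i $ j = (\<Sum>n. (M ** mpow l n) $ i $ j / fact n * s ^ n)"
proof -
  have "(M ** mexp l s) $ i $ j = (\<Sum>k\<in>UNIV. M $ i $ k * (\<Sum>n. mpow l n $ k $ j / fact n * s ^ n))"
    by (simp add: matrix_matrix_mult_def mexp_def)
  also have "\<dots> = (\<Sum>k\<in>UNIV. \<Sum>n. M $ i $ k * (mpow l n $ k $ j / fact n * s ^ n))"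
    by (intro sum.cong refl suminf_mult[symmetric] mpow_summable1)
  also have "\<dots> = (\<Sum>n. \<Sum>k\<in>UNIV. M $ i $ k * (mpow l n $ k $ j / fact n * s ^ n))"
    by (intro suminf_sum[symmetric] summable_mult mpow_summable1)
  also have "\<dots> = (\<Sum>n. (M ** mpow l n) $ i $ j / fact n * s ^ n)"
    by (rule suminf_cong) (simp add: matrix_matrix_mult_def sum_distrib_right sum_divide_distrib mult.assoc)
  finally show ?thesis .
qed

lemma mexp_mult_right:
  "(mexp l s ** M) $ i $ j = (\<Sum>n. (mpow l n ** M) $ i $ j / fact n * s ^ n)"
proof -
  have sm: "summable (\<lambda>n. mpow l n $ i $ k / fact n * s ^ n * M $ k $ j)" for k
    by (intro summable_mult2 mpow_summable1)
  have "(mexp l s ** M) $ i $ j = (\<Sum>k\<in>UNIV. (\<Sum>n. mpow l n $ i $ k / fact n * s ^ n) * M $ k $ j)"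
    by (simp add: matrix_matrix_mult_def mexp_def)
  also have "\<dots> = (\<Sum>k\<in>UNIV. \<Sum>n. mpow l n $ i $ k / fact n * s ^ n * M $ k $ j)"
    by (intro sum.cong refl suminf_mult2 mpow_summable1)
  also have "\<dots> = (\<Sum>n. \<Sum>k\<in>UNIV. mpow l n $ i $ k / fact n * s ^ n * M $ k $ j)"
    by (intro suminf_sum[symmetric] sm)
  also have "\<dots> = (\<Sum>n. (mpow l n ** M) $ i $ j / fact n * s ^ n)"
    by (rule suminf_cong) (simp add: matrix_matrix_mult_def sum_distrib_right sum_distrib_left sum_divide_distrib mult_ac)
  finally show ?thesis .
qed

lemma mexp_comm: "l ** mexp l s = mexp l s ** l"
  by (simp add: vec_eq_iff mexp_mult_left mexp_mult_right flip: mpow_Suc mpow_Suc')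

lemma mexp_zero [simp]: "mexp l 0 = mat 1"
proof -
  have "(\<Sum>n. mpow l n $ i $ j / fact n * 0 ^ n) = mat 1 $ i $ j" for i j
    using powser_zero[of "\<lambda>n. mpow l n $ i $ j / fact n"] by simp
  then show ?thesis by (simp add: mexp_def vec_eq_iff)
qed

lemma mexp_deriv: "mderiv (mexp l) (l ** mexp l s) s"
  unfolding mderiv_def
proof (intro allI)
  fix i j
  have dif: "diffs (\<lambda>n. mpow l n $ i $ j / fact n) n = (l ** mpow l n) $ i $ j / fact n" for n
    by (simp add: diffs_def mpow_Suc fact_Suc del: of_nat_Suc)
  have e: "(\<lambda>s. mexp l s $ i $ j) = (\<lambda>x. \<Sum>n. mpow l n $ i $ j / fact n * x ^ n)"
    by (simp add: mexp_def)
  have v: "(l ** mexp l s) $ i $ j = (\<Sum>n. diffs (\<lambda>n. mpow l n $ i $ j / fact n) n * s ^ n)"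
    unfolding mexp_mult_left dif by simp
  show "((\<lambda>s. mexp l s $ i $ j) has_real_derivative (l ** mexp l s) $ i $ j) (at s)"
    unfolding e v
    by (rule termdiffs_strong_converges_everywhere) (rule mpow_summable1)
qed

lemma mexp_inv: "mexp l s ** mexp l (- s) = mat 1"
proof -
  let ?P = "\<lambda>s. mexp l s ** mexp l (- s)"
  have "mderiv ?P 0 t" for t
  proof -
    have d2: "mderiv (\<lambda>s. mexp l (- s)) ((-1) *\<^sub>R (l ** mexp l (- t))) t"
      by (rule mderiv_chain[OF mexp_deriv]) (auto intro!: derivative_eq_intros)
    show ?thesis
      by (rule mderiv_cong[OF mderiv_mult[OF mexp_deriv d2]])
         (simp add: matrix_scalar_ac matrix_mul_assoc mexp_comm[symmetric])
  qed
  then have "?P s = ?P 0" by (intro mderiv_zero_const[of UNIV]) auto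
  then show ?thesis by simp
qed

lemma eta_transpose [simp]: "transpose eta = eta"
  by (simp add: eta_def transpose_def vec_eq_iff)

lemma mexp_lorentz:
  assumes "lorentz_alg l"
  shows "transpose (mexp l s) ** eta ** mexp l s = eta"
proof -
  let ?Q = "\<lambda>s. transpose (mexp l s) ** eta ** mexp l s"
  have al: "transpose l ** eta = - (eta ** l)"
    using assms unfolding lorentz_alg_def by (simp add: matrix_transpose_mul)
  have "mderiv ?Q 0 t" for t
  proof -
    have "mderiv ?Q ((transpose (l ** mexp l t) ** eta + transpose (mexp l t) ** 0) ** mexp l t
            + (transpose (mexp l t) ** eta) ** (l ** mexp l t)) t"
      by (intro mderiv_mult mderiv_transpose mexp_deriv mderiv_const)
    moreover have "(transpose (l ** mexp l t) ** eta + transpose (mexp l t) ** 0) ** mexp l t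
            + (transpose (mexp l t) ** eta) ** (l ** mexp l t) = 0"
    proof -
      have "(transpose (l ** mexp l t) ** eta) ** mexp l t
          = transpose (mexp l t) ** (transpose l ** eta) ** mexp l t"
        by (simp add: matrix_transpose_mul matrix_mul_assoc)
      also have "\<dots> = - (transpose (mexp l t) ** (eta ** l) ** mexp l t)"
        by (simp add: al matrix_mul_assoc)
      finally show ?thesis
        by (simp add: matrix_mul_assoc)
    qed
    ultimately show ?thesis by simp
  qed
  then have "?Q s = ?Q 0" by (intro mderiv_zero_const[of UNIV]) auto
  then show ?thesis by simp
qed

lemma pd_has_deriv:
  assumes "F differentiable (at x)"
  shows "((\<lambda>t. F (x + t *\<^sub>R axis mu 1)) has_real_derivative pd F mu x) (at 0)"
proof -
  have "(\<lambda>t::real. x + t *\<^sub>R axis mu (1::real)) differentiable (at 0)"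
    by (intro derivative_intros)
  moreover have "F differentiable (at ((\<lambda>t::real. x + t *\<^sub>R axis mu (1::real)) 0))"
    using assms by simp
  ultimately have "(F \<circ> (\<lambda>t::real. x + t *\<^sub>R axis mu (1::real))) differentiable (at 0)"
    by (rule differentiable_chain_at)
  then show ?thesis
    unfolding pd_def by (simp add: o_def DERIV_deriv_iff_real_differentiable)
qed

lemma pd_shift:
  assumes "F differentiable (at (chi_shift x0 t))"
  shows "((\<lambda>s. F (chi_shift x0 s)) has_real_derivative pd F 3 (chi_shift x0 t)) (at t)"
proof -
  have "((\<lambda>u. F (chi_shift x0 t + u *\<^sub>R axis 3 1)) has_real_derivative pd F 3 (chi_shift x0 t)) (at 0)"
    by (rule pd_has_deriv[OF assms])
  moreover have "(\<lambda>u. F (chi_shift x0 t + u *\<^sub>R axis 3 1)) = (\<lambda>u. F (chi_shift x0 (u + t)))"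
    by (simp add: chi_shift_def algebra_simps)
  ultimately show ?thesis
    using DERIV_shift[of "\<lambda>s. F (chi_shift x0 s)" _ 0 t] by simp
qed

lemma pd_const [simp]: "pd (\<lambda>y. c) mu x = 0"
  unfolding pd_def by (simp add: DERIV_imp_deriv)

lemma pd_fun3:
  fixes \<phi> :: "real \<Rightarrow> real"
  assumes "\<phi> differentiable (at (x $ 3))"
  shows "pd (\<lambda>y. \<phi> (y $ 3)) mu x = (if mu = 3 then deriv \<phi> (x $ 3) else 0)"
proof (cases "mu = 3")
  case True
  have "DERIV \<phi> (0 + x $ 3) :> deriv \<phi> (x $ 3)"
    using assms by (simp add: DERIV_deriv_iff_real_differentiable)
  then have "((\<lambda>t. \<phi> (t + x $ 3)) has_real_derivative deriv \<phi> (x $ 3)) (at 0)"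
    by (simp only: DERIV_shift)
  then show ?thesis
    using True unfolding pd_def by (simp add: add.commute DERIV_imp_deriv)
next
  case False
  then have "axis mu (1::real) $ 3 = 0"
    by (simp add: axis_def)
  then show ?thesis using False unfolding pd_def by (simp add: DERIV_imp_deriv)
qed

lemma pd_chi_zero:
  assumes "open D" "chi_indep D F" "x \<in> D"
  shows "pd F 3 x = 0"
proof -
  obtain e where e: "e > 0" "ball x e \<subseteq> D" using assms openE by blast
  have eq: "F (x + t *\<^sub>R axis 3 1) = F x" if "t \<in> ball 0 e" for t
  proof -
    have "chi_shift x t \<in> ball x e"
      using that by (simp add: chi_shift_def dist_norm norm_axis_1)
    then show ?thesis using e assms(2,3) unfolding chi_indep_def chi_shift_def by blast
  qed
  have "((\<lambda>t. F x) has_real_derivative 0) (at 0)" by simp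
  then have "((\<lambda>t. F (x + t *\<^sub>R axis 3 1)) has_real_derivative 0) (at 0)"
    by (rule has_field_derivative_transform_within_open[of _ _ _ "ball 0 e"]) (use e eq in auto)
  then show ?thesis unfolding pd_def by (rule DERIV_imp_deriv)
qed

lemma chi_indep_comp: "chi_indep D F \<Longrightarrow> chi_indep D (\<lambda>y. G (F y))"
  unfolding chi_indep_def by auto

lemma chi_indep_pair: "chi_indep D F \<Longrightarrow> chi_indep D G \<Longrightarrow> chi_indep D (\<lambda>y. (F y, G y))"
  unfolding chi_indep_def by auto

lemma antideriv_open:
  fixes g :: "real \<Rightarrow> real"
  assumes U: "open U" and g: "continuous_on U g"
  shows "\<exists>G. \<forall>s\<in>U. (G has_real_derivative g s) (at s)"
proof -
  define base where "base s = (SOME p. p \<in> connected_component_set U s)" for s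
  define G where "G s = (if base s \<le> s then integral {base s..s} g else - integral {s..base s} g)" for s
  have "(G has_real_derivative g s) (at s)" if s: "s \<in> U" for s
  proof -
    let ?C = "connected_component_set U s"
    have sC: "s \<in> ?C" using s by (simp add: connected_component_refl)
    have oC: "open ?C" using U by (rule open_connected_component)
    have iC: "is_interval ?C" by (simp add: is_interval_connected_1)
    have CU: "?C \<subseteq> U" by (rule connected_component_subset)
    define a where "a = base s"
    have aC: "a \<in> ?C" unfolding a_def base_def using sC by (rule someI)
    have base_eq: "base u = a" if "u \<in> ?C" for u
      unfolding a_def base_def using connected_component_eq[OF that] by simp
    obtain e where e: "e > 0" "ball s e \<subseteq> ?C" using oC sC openE by blast
    define p where "p = min a (s - e/2)"
    define q where "q = max a (s + e/2)"
    have "s - e/2 \<in> ball s e" "s + e/2 \<in> ball s e" using e by (auto simp: dist_real_def)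
    then have "s - e/2 \<in> ?C" "s + e/2 \<in> ?C" using e(2) by blast+
    then have pC: "p \<in> ?C" and qC: "q \<in> ?C" using aC by (auto simp: p_def q_def min_def max_def)
    have pq: "p < s" "s < q" "p \<le> a" "a \<le> q" using e by (auto simp: p_def q_def)
    have sub: "{p..q} \<subseteq> ?C"
      using mem_is_interval_1_I[OF iC pC qC] by auto
    have cont: "continuous_on {p..q} g"
      using g sub CU continuous_on_subset by blast
    have int: "g integrable_on {u..v}" if "p \<le> u" "v \<le> q" for u v
      using integrable_continuous_real[OF continuous_on_subset[OF cont]] that by auto
    define \<phi> where "\<phi> u = integral {p..u} g - integral {p..a} g" for u
    have Gphi: "G u = \<phi> u" if "u \<in> {p<..<q}" for u
    proof -
      have "u \<in> {p..q}" using that by auto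
      then have uC: "u \<in> ?C" using sub by blast
      show ?thesis
      proof (cases "a \<le> u")
        case True
        have "integral {p..a} g + integral {a..u} g = integral {p..u} g"
          using True pq that by (intro Henstock_Kurzweil_Integration.integral_combine int) auto
        then show ?thesis using True by (simp add: G_def base_eq[OF uC] \<phi>_def)
      next
        case False
        have "integral {p..u} g + integral {u..a} g = integral {p..a} g"
          using False pq that by (intro Henstock_Kurzweil_Integration.integral_combine int) auto
        then show ?thesis using False by (simp add: G_def base_eq[OF uC] \<phi>_def)
      qed
    qed
    have "((\<lambda>u. integral {p..u} g) has_real_derivative g s) (at s within {p..q})"
      using pq by (intro integral_has_real_derivative cont) auto
    then have "((\<lambda>u. integral {p..u} g) has_real_derivative g s) (at s within {p<..<q})"
      by (rule has_field_derivative_subset) auto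
    moreover have eqat: "at s within {p<..<q} = at s"
      using pq by (intro at_within_open) auto
    ultimately have "((\<lambda>u. integral {p..u} g) has_real_derivative g s) (at s)"
      by (simp only: eqat)
    then have "(\<phi> has_real_derivative g s) (at s)"
      unfolding \<phi>_def by (auto intro!: derivative_eq_intros)
    then show ?thesis
      by (rule has_field_derivative_transform_within_open[of _ _ _ "{p<..<q}"])
         (use pq Gphi in auto)
  qed
  then show ?thesis by blast
qed

lemma matrix_inv_eq:
  fixes A B :: "real^'n^'n"
  assumes "A ** B = mat 1" "B ** A = mat 1"
  shows "matrix_inv A = B"
proof -
  have "\<exists>A'. A ** A' = mat 1 \<and> A' ** A = mat 1" using assms by blast
  then have X: "A ** matrix_inv A = mat 1 \<and> matrix_inv A ** A = mat 1"
    unfolding matrix_inv_def by (rule someI_ex)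
  have "matrix_inv A = matrix_inv A ** (A ** B)" using assms by simp
  also have "\<dots> = B" using X by (simp add: matrix_mul_assoc)
  finally show ?thesis .
qed

lemma matrix_inv_props:
  fixes A :: "real^'n^'n"
  assumes "invertible A"
  shows "A ** matrix_inv A = mat 1" "matrix_inv A ** A = mat 1"
  using assms unfolding invertible_def matrix_inv_def by (metis (mono_tags, lifting) someI_ex)+

lemma transpose_add: "transpose (A + B) = transpose A + transpose (B::real^'n^'m)"
  by (simp add: transpose_def vec_eq_iff)

lemma transpose_diff: "transpose (A - B) = transpose A - transpose (B::real^'n^'m)"
  by (simp add: transpose_def vec_eq_iff)

lemma transpose_uminus: "transpose (- A) = - transpose (A::real^'n^'m)"
  by (simp add: transpose_def vec_eq_iff)

lemma matrix_add_rdistrib': "((A::real^'n^'m) + B) ** C = A ** C + B ** C"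
  by (simp add: vec_eq_iff matrix_matrix_mult_def sum.distrib algebra_simps)

lemma matrix_diff_rdistrib: "((A::real^'n^'m) - B) ** C = A ** C - B ** C"
  by (simp add: vec_eq_iff matrix_matrix_mult_def sum_subtractf algebra_simps)

lemma matrix_diff_ldistrib: "(C::real^'n^'m) ** (A - B) = C ** A - C ** B"
  by (simp add: vec_eq_iff matrix_matrix_mult_def sum_subtractf algebra_simps)

lemma matrix_scale_left: "(k *\<^sub>R (A::real^'n^'m)) ** B = k *\<^sub>R (A ** B)"
  by (simp add: scalar_matrix_assoc)

lemma matrix_scale_right: "(A::real^'n^'m) ** (k *\<^sub>R B) = k *\<^sub>R (A ** B)"
  by (simp add: vec_eq_iff matrix_matrix_mult_def sum_distrib_left mult_ac)

lemmas mat_simps = matrix_add_ldistrib matrix_add_rdistrib' matrix_diff_rdistrib matrix_diff_ldistrib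
  matrix_scale_left matrix_scale_right matrix_mul_assoc

lemma congr_antisym:
  fixes X P :: "real^'n^'n"
  assumes "transpose X = - X"
  shows "transpose (transpose P ** X ** P) = - (transpose P ** X ** P)"
  using assms by (simp add: matrix_transpose_mul matrix_mul_assoc)

lemma sum_axis3: "(\<Sum>nu\<in>UNIV. axis 3 (1::real) $ nu * F nu) = F (3::4)"
proof -
  have "(\<Sum>nu\<in>UNIV. axis 3 (1::real) $ nu * F nu) = (\<Sum>nu\<in>UNIV. if nu = 3 then F nu else 0)"
    by (rule sum.cong) (auto simp: axis_def)
  then show ?thesis by simp
qed

lemma lie_coframe_axis:
  "lie_coframe (\<lambda>x. axis 3 1) h y $ a $ mu = pd (\<lambda>y. h y $ a $ mu) 3 y"
  unfolding lie_coframe_def by (simp add: sum_axis3)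

lemma lie_conn_axis:
  "lie_conn (\<lambda>x. axis 3 1) h w f l y a b c =
     pd (\<lambda>y. w y a b c) 3 y
     - (\<Sum>d\<in>UNIV. f y * l $ a $ d * w y d b c)
     + (\<Sum>d\<in>UNIV. w y a d c * (f y * l $ d $ b))
     + (\<Sum>d\<in>UNIV. w y a b d * (f y * l $ d $ c))
     + frame_deriv h f c y * l $ a $ b"
  unfolding lie_conn_def by (simp add: sum_axis3)

lemma chi3: "chi_shift x0 s $ 3 = x0 $ 3 + s"
  by (simp add: chi_shift_def axis_def)

lemma chi0 [simp]: "chi_shift x0 0 = x0"
  by (simp add: chi_shift_def)

lemma open_slice: "open D \<Longrightarrow> open {s. chi_shift x0 s \<in> D}"
proof -
  assume "open D"
  moreover have "continuous (at s) (chi_shift x0)" for s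
    unfolding chi_shift_def by (intro continuous_intros)
  ultimately have "open (chi_shift x0 -` D)" by (rule continuous_open_vimage)
  then show ?thesis by (simp add: vimage_def)
qed

lemma mderiv_transform:
  assumes "mderiv B B' t" "open S" "t \<in> S" "\<And>s. s \<in> S \<Longrightarrow> A s = B s"
  shows "mderiv A B' t"
  unfolding mderiv_def
proof (intro allI)
  fix i j
  have "((\<lambda>s. B s $ i $ j) has_real_derivative B' $ i $ j) (at t)"
    using assms(1) unfolding mderiv_def by blast
  then show "((\<lambda>s. A s $ i $ j) has_real_derivative B' $ i $ j) (at t)"
    by (rule has_field_derivative_transform_within_open[OF _ assms(2,3)]) (simp add: assms(4))
qed

lemma lower_antisym_gen:
  assumes W: "\<And>a b c. W x a b c = (\<Sum>mu\<in>UNIV. M mu $ a $ b * K $ mu $ c)"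
    and M: "\<And>mu. transpose (eta ** M mu) = - (eta ** M mu)"
  shows "lower W x a b c = - lower W x b a c"
proof -
  have l: "lower W x a b c = (\<Sum>mu\<in>UNIV. (eta ** M mu) $ a $ b * K $ mu $ c)" for a b
  proof -
    have "lower W x a b c = (\<Sum>e\<in>UNIV. \<Sum>mu\<in>UNIV. eta $ a $ e * (M mu $ e $ b * K $ mu $ c))"
      unfolding lower_def W by (simp add: sum_distrib_left)
    also have "\<dots> = (\<Sum>mu\<in>UNIV. \<Sum>e\<in>UNIV. eta $ a $ e * (M mu $ e $ b * K $ mu $ c))"
      by (rule sum.swap)
    also have "\<dots> = (\<Sum>mu\<in>UNIV. (eta ** M mu) $ a $ b * K $ mu $ c)"
      by (simp add: matrix_matrix_mult_def sum_distrib_right mult.assoc)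
    finally show ?thesis .
  qed
  have e: "(eta ** M mu) $ a $ b = - (eta ** M mu) $ b $ a" for mu
    using arg_cong[OF M[of mu], of "\<lambda>X. X $ b $ a"] by (simp add: transpose_def)
  show ?thesis unfolding l by (simp add: e sum_negf)
qed

lemma zero_total:
  fixes L Li l Om Om' :: "real^'n^'n"
  assumes c: "L ** l = l ** L" and i: "L ** Li = mat 1"
    and o: "Om' = gv *\<^sub>R (l ** Om - Om ** l) - k *\<^sub>R l"
  shows "((- gv) *\<^sub>R (l ** L) ** Om + L ** Om') ** Li + (L ** Om) ** (gv *\<^sub>R (l ** Li)) + k *\<^sub>R l = 0"
proof -
  have i': "X ** L ** Li = X" for X :: "real^'n^'n"
    using i by (simp flip: matrix_mul_assoc)
  show ?thesis
    unfolding o by (simp add: mat_simps c i' algebra_simps)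
qed

lemma key_conn:
  fixes h :: "real^4 \<Rightarrow> real^4^4" and w :: "real^4 \<Rightarrow> 4 \<Rightarrow> 4 \<Rightarrow> 4 \<Rightarrow> real"
  assumes inv: "invertible (h y)"
    and lc: "\<And>a mu. pd (\<lambda>y. h y $ a $ mu) 3 y = gv * (l ** h y) $ a $ mu"
    and cn: "\<And>a b c. pd (\<lambda>y. w y a b c) 3 y = (\<Sum>d\<in>UNIV. gv * l$a$d * w y d b c)
        - (\<Sum>d\<in>UNIV. w y a d c * (gv * l$d$b)) - (\<Sum>d\<in>UNIV. w y a b d * (gv * l$d$c))
        - matrix_inv (h y) $ 3 $ c * gd * l$a$b"
  shows "(\<chi> a b. \<Sum>c\<in>UNIV. pd (\<lambda>y. w y a b c) 3 y * h y $ c $ mu + w y a b c * pd (\<lambda>y. h y $ c $ mu) 3 y)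
       = gv *\<^sub>R (l ** coord_conn h w y mu - coord_conn h w y mu ** l) - (if mu = 3 then gd else 0) *\<^sub>R l"
proof -
  let ?Om = "coord_conn h w y mu"
  have ent: "(\<Sum>c\<in>UNIV. pd (\<lambda>y. w y a b c) 3 y * h y $ c $ mu + w y a b c * pd (\<lambda>y. h y $ c $ mu) 3 y)
       = gv * (l ** ?Om) $ a $ b - gv * (?Om ** l) $ a $ b - (if mu = 3 then gd else 0) * l $ a $ b" for a b
  proof -
    define X where "X c = (\<Sum>d\<in>UNIV. gv * l$a$d * w y d b c)" for c
    define Y where "Y c = (\<Sum>d\<in>UNIV. w y a d c * (gv * l$d$b))" for c
    define Z where "Z c = (\<Sum>d\<in>UNIV. w y a b d * (gv * l$d$c))" for c
    define V where "V c = matrix_inv (h y) $ 3 $ c * gd * l$a$b" for c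
    define q where "q c = gv * (l ** h y) $ c $ mu" for c
    have "(\<Sum>c\<in>UNIV. pd (\<lambda>y. w y a b c) 3 y * h y $ c $ mu + w y a b c * pd (\<lambda>y. h y $ c $ mu) 3 y)
        = (\<Sum>c\<in>UNIV. X c * h y $ c $ mu - Y c * h y $ c $ mu - Z c * h y $ c $ mu - V c * h y $ c $ mu + w y a b c * q c)"
      by (rule sum.cong) (simp_all add: cn lc X_def Y_def Z_def V_def q_def algebra_simps)
    also have "\<dots> = (\<Sum>c\<in>UNIV. X c * h y $ c $ mu) - (\<Sum>c\<in>UNIV. Y c * h y $ c $ mu)
        - (\<Sum>c\<in>UNIV. Z c * h y $ c $ mu) - (\<Sum>c\<in>UNIV. V c * h y $ c $ mu) + (\<Sum>c\<in>UNIV. w y a b c * q c)"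
      by (simp add: sum.distrib sum_subtractf)
    also have "(\<Sum>c\<in>UNIV. X c * h y $ c $ mu) = gv * (l ** ?Om) $ a $ b"
    proof -
      have "(\<Sum>c\<in>UNIV. X c * h y $ c $ mu) = (\<Sum>c\<in>UNIV. \<Sum>d\<in>UNIV. gv * l$a$d * w y d b c * h y $ c $ mu)"
        by (simp add: X_def sum_distrib_right)
      also have "\<dots> = (\<Sum>d\<in>UNIV. \<Sum>c\<in>UNIV. gv * l$a$d * w y d b c * h y $ c $ mu)"
        by (rule sum.swap)
      also have "\<dots> = gv * (l ** ?Om) $ a $ b"
        by (simp add: matrix_matrix_mult_def coord_conn_def sum_distrib_left mult_ac)
      finally show ?thesis .
    qed
    also have "(\<Sum>c\<in>UNIV. Y c * h y $ c $ mu) = gv * (?Om ** l) $ a $ b"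
    proof -
      have "(\<Sum>c\<in>UNIV. Y c * h y $ c $ mu) = (\<Sum>c\<in>UNIV. \<Sum>d\<in>UNIV. w y a d c * (gv * l$d$b) * h y $ c $ mu)"
        by (simp add: Y_def sum_distrib_right)
      also have "\<dots> = (\<Sum>d\<in>UNIV. \<Sum>c\<in>UNIV. w y a d c * (gv * l$d$b) * h y $ c $ mu)"
        by (rule sum.swap)
      also have "\<dots> = gv * (?Om ** l) $ a $ b"
        by (simp add: matrix_matrix_mult_def coord_conn_def sum_distrib_left sum_distrib_right mult_ac)
      finally show ?thesis .
    qed
    also have "(\<Sum>c\<in>UNIV. Z c * h y $ c $ mu) = (\<Sum>c\<in>UNIV. w y a b c * q c)"
    proof -
      have "(\<Sum>c\<in>UNIV. Z c * h y $ c $ mu) = (\<Sum>c\<in>UNIV. \<Sum>d\<in>UNIV. w y a b d * (gv * l$d$c) * h y $ c $ mu)"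
        by (simp add: Z_def sum_distrib_right)
      also have "\<dots> = (\<Sum>d\<in>UNIV. \<Sum>c\<in>UNIV. w y a b d * (gv * l$d$c) * h y $ c $ mu)"
        by (rule sum.swap)
      also have "\<dots> = (\<Sum>c\<in>UNIV. w y a b c * q c)"
        by (simp add: q_def matrix_matrix_mult_def sum_distrib_left mult_ac)
      finally show ?thesis .
    qed
    also have "(\<Sum>c\<in>UNIV. V c * h y $ c $ mu) = (if mu = 3 then gd else 0) * l $ a $ b"
    proof -
      have "(\<Sum>c\<in>UNIV. V c * h y $ c $ mu) = gd * l$a$b * (matrix_inv (h y) ** h y) $ 3 $ mu"
        by (simp add: V_def matrix_matrix_mult_def sum_distrib_left mult_ac)
      also have "\<dots> = (if mu = 3 then gd else 0) * l $ a $ b"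
        using matrix_inv_props(2)[OF inv] by (simp add: mat_def)
      finally show ?thesis .
    qed
    finally show ?thesis by simp
  qed
  show ?thesis
    apply (simp only: vec_eq_iff vec_lambda_beta ent)
    apply (simp add: algebra_simps)
    done
qed

lemma pd_eps: "pd (\<lambda>y::real^4. \<epsilon> * y $ 3) mu y = (if mu = 3 then \<epsilon> else 0)"
proof -
  have d: "((\<lambda>s. \<epsilon> * s) has_real_derivative \<epsilon>) (at (y $ 3))"
    by (auto intro!: derivative_eq_intros)
  then have "(\<lambda>s. \<epsilon> * s) differentiable (at (y $ 3))"
    using real_differentiable_def by blast
  from pd_fun3[OF this, of mu] show ?thesis
    using DERIV_imp_deriv[OF d] by simp
qed

lemma converse_part:
  fixes D :: "(real^4) set" and H :: "real^4 \<Rightarrow> real^4^4" and W :: "real^4 \<Rightarrow> 4 \<Rightarrow> 4 \<Rightarrow> 4 \<Rightarrow> real"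
    and l :: "real^4^4"
  assumes D: "open D" and cH: "chi_indep D H" and cW: "chi_indep D W"
  shows "\<exists>f l'. affine_frame_symmetry D H
                (\<lambda>x a b c. W x a b c - frame_deriv H (\<lambda>y. \<epsilon> * y $ 3) c x * l $ a $ b)
                (\<lambda>x. axis 3 1) f l'"
proof (intro exI)
  let ?w = "\<lambda>x a b c. W x a b c - frame_deriv H (\<lambda>y. \<epsilon> * y $ 3) c x * l $ a $ b"
  have la: "lorentz_alg (0::real^4^4)"
    by (simp add: lorentz_alg_def transpose_def vec_eq_iff)
  have cf: "lie_coframe (\<lambda>x. axis 3 1) H x = (0::real) *\<^sub>R (0 ** H x)" if "x \<in> D" for x
  proof -
    have "pd (\<lambda>y. H y $ a $ mu) 3 x = 0" for a mu
      by (rule pd_chi_zero[OF D chi_indep_comp[OF cH] that])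
    then show ?thesis by (simp add: vec_eq_iff lie_coframe_axis)
  qed
  have cc: "lie_conn (\<lambda>x. axis 3 1) H ?w (\<lambda>x. 0) 0 x a b c = 0" if "x \<in> D" for x a b c
  proof -
    define F where "F p = fst p a b c - (\<Sum>mu\<in>UNIV. matrix_inv (snd p) $ mu $ c * (if mu = 3 then \<epsilon> else 0)) * l $ a $ b"
      for p :: "(4 \<Rightarrow> 4 \<Rightarrow> 4 \<Rightarrow> real) \<times> (real^4^4)"
    have eqf: "(\<lambda>y. ?w y a b c) = (\<lambda>y. F (W y, H y))"
      by (rule ext) (simp add: F_def frame_deriv_def dual_def pd_eps)
    have "chi_indep D (\<lambda>y. ?w y a b c)"
      unfolding eqf by (rule chi_indep_comp[OF chi_indep_pair[OF cW cH]])
    then have "pd (\<lambda>y. ?w y a b c) 3 x = 0"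
      by (rule pd_chi_zero[OF D _ that])
    then show ?thesis by (simp add: lie_conn_axis frame_deriv_def)
  qed
  show "affine_frame_symmetry D H ?w (\<lambda>x. axis 3 1) (\<lambda>x. 0) 0"
    unfolding affine_frame_symmetry_def using la cf cc by auto
qed

lemma forward_part:
  fixes D :: "(real^4) set"
    and h :: "real^4 \<Rightarrow> real^4^4"
    and w :: "real^4 \<Rightarrow> 4 \<Rightarrow> 4 \<Rightarrow> 4 \<Rightarrow> real"
    and g :: "real \<Rightarrow> real"
    and l :: "real^4^4"
  assumes D_open: "open D"
    and D_slices: "\<forall>x\<in>D. is_interval {t. chi_shift x t \<in> D}"
    and h_inv: "\<forall>x\<in>D. invertible (h x)"
    and h_diff: "\<forall>a mu. (\<lambda>y. h y $ a $ mu) differentiable_on D"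
    and w_diff: "\<forall>a b c. (\<lambda>y. w y a b c) differentiable_on D"
    and w_metric: "\<forall>x\<in>D. \<forall>a b c. lower w x a b c = - lower w x b a c"
    and g_diff: "\<forall>x\<in>D. g differentiable (at (x $ 3))"
    and sym: "affine_frame_symmetry D h w (\<lambda>x. axis 3 1) (\<lambda>x. g (x $ 3)) l"
  shows
    "(\<exists>L H W (\<epsilon>::real).
        (\<forall>x\<in>D. lorentz_mat (L x))
      \<and> (\<forall>a b. (\<lambda>y. L y $ a $ b) differentiable_on D)
      \<and> \<epsilon> \<in> {0, 1}
      \<and> chi_indep D H \<and> chi_indep D W
      \<and> (\<forall>x\<in>D. \<forall>a b c. lower W x a b c = - lower W x b a c)
      \<and> (\<forall>x\<in>D. gauge_coframe L h x = H x)
      \<and> (\<forall>x\<in>D. \<forall>a b c. gauge_conn L h w x a b c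
             = W x a b c - frame_deriv H (\<lambda>y. \<epsilon> * y $ 3) c x * l $ a $ b))"
proof -
  have la: "lorentz_alg l"
    and lc0: "\<And>x. x \<in> D \<Longrightarrow> lie_coframe (\<lambda>x. axis 3 1) h x = g (x $ 3) *\<^sub>R (l ** h x)"
    and cn0: "\<And>x a b c. x \<in> D \<Longrightarrow> lie_conn (\<lambda>x. axis 3 1) h w (\<lambda>x. g (x $ 3)) l x a b c = 0"
    using sym unfolding affine_frame_symmetry_def by auto
  have hd: "(\<lambda>y. h y $ a $ mu) differentiable (at x)" if "x \<in> D" for a mu x
    using h_diff D_open that differentiable_on_eq_differentiable_at by blast
  have wd: "(\<lambda>y. w y a b c) differentiable (at x)" if "x \<in> D" for a b c x
    using w_diff D_open that differentiable_on_eq_differentiable_at by blast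
  have gder: "(g has_real_derivative deriv g (x $ 3)) (at (x $ 3))" if "x \<in> D" for x
    using g_diff that DERIV_deriv_iff_real_differentiable by blast
  define U where "U = (\<lambda>x::real^4. x $ 3) ` D"
  have oU: "open U" unfolding U_def by (rule open_image_vec_nth[OF D_open])
  have cU: "continuous_on U g"
  proof (rule continuous_at_imp_continuous_on, intro ballI)
    fix s assume "s \<in> U"
    then obtain x where x: "x \<in> D" "s = x $ 3" unfolding U_def by blast
    have "g differentiable (at s)" using g_diff x by auto
    then show "isCont g s" using differentiable_imp_continuous_within by blast
  qed
  obtain G where G: "\<And>s. s \<in> U \<Longrightarrow> (G has_real_derivative g s) (at s)"
    using antideriv_open[OF oU cU] by blast
  have GD: "(G has_real_derivative g (x $ 3)) (at (x $ 3))" if "x \<in> D" for x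
    using G that unfolding U_def by blast
  define L where "L y = mexp l (- G (y $ 3))" for y :: "real^4"
  define Li where "Li y = mexp l (G (y $ 3))" for y :: "real^4"
  have LLi: "L y ** Li y = mat 1" for y
    using mexp_inv[of l "- G (y $ 3)"] by (simp add: L_def Li_def)
  have LiL: "Li y ** L y = mat 1" for y
    using mexp_inv[of l "G (y $ 3)"] by (simp add: L_def Li_def)
  have Linv: "matrix_inv (L y) = Li y" for y
    by (rule matrix_inv_eq[OF LLi LiL])
  have Lc: "L y ** l = l ** L y" for y
    unfolding L_def by (simp add: mexp_comm)
  have Lic: "Li y ** l = l ** Li y" for y
    unfolding Li_def by (simp add: mexp_comm)
  have Lor: "transpose (L y) ** eta ** L y = eta" for y
    unfolding L_def by (rule mexp_lorentz[OF la])
  have dLs: "mderiv (\<lambda>s. mexp l (- G s)) ((- g s) *\<^sub>R (l ** mexp l (- G s))) s" if "s \<in> U" for s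
  proof -
    have "((\<lambda>s. - G s) has_real_derivative - g s) (at s)"
      using G[OF that] by (rule DERIV_minus)
    then show ?thesis by (rule mderiv_chain[OF mexp_deriv])
  qed
  have dLis: "mderiv (\<lambda>s. mexp l (G s)) (g s *\<^sub>R (l ** mexp l (G s))) s" if "s \<in> U" for s
    using mderiv_chain[OF mexp_deriv G[OF that]] .
  have Ldiff: "(\<lambda>y. L y $ a $ b) differentiable (at x)" if "x \<in> D" for a b x
  proof -
    have "x $ 3 \<in> U" using that unfolding U_def by blast
    then have "((\<lambda>s. mexp l (- G s) $ a $ b) has_real_derivative ((- g (x $ 3)) *\<^sub>R (l ** mexp l (- G (x $ 3)))) $ a $ b) (at (x $ 3))"
      using dLs unfolding mderiv_def by blast
    then have d1: "(\<lambda>s. mexp l (- G s) $ a $ b) differentiable (at ((\<lambda>y::real^4. y $ 3) x))"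
      using real_differentiable_def by auto
    have d0: "(\<lambda>y::real^4. y $ 3) differentiable (at x)"
      by (rule bounded_linear_imp_differentiable[OF bounded_linear_vec_nth])
    have "((\<lambda>s. mexp l (- G s) $ a $ b) \<circ> (\<lambda>y::real^4. y $ 3)) differentiable (at x)"
      by (rule differentiable_chain_at[OF d0 d1])
    then show ?thesis by (simp add: o_def L_def)
  qed
  have pdLi: "pd (\<lambda>y. Li y $ d $ b) mu x = (if mu = 3 then g (x $ 3) * (l ** Li x) $ d $ b else 0)"
    if "x \<in> D" for d b mu x
  proof -
    have "x $ 3 \<in> U" using that unfolding U_def by blast
    then have dd: "((\<lambda>s. mexp l (G s) $ d $ b) has_real_derivative (g (x $ 3) *\<^sub>R (l ** mexp l (G (x $ 3)))) $ d $ b) (at (x $ 3))"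
      using dLis unfolding mderiv_def by blast
    then have "(\<lambda>s. mexp l (G s) $ d $ b) differentiable (at (x $ 3))"
      using real_differentiable_def by auto
    from pd_fun3[OF this, of mu] DERIV_imp_deriv[OF dd]
    show ?thesis by (simp add: Li_def)
  qed
  define HH where "HH y = L y ** h y" for y :: "real^4"
  define M where "M y mu = L y ** coord_conn h w y mu ** Li y
     + (\<chi> a b. \<Sum>d\<in>UNIV. L y $ a $ d * pd (\<lambda>y. Li y $ d $ b) mu y)" for y :: "real^4" and mu :: 4
  define WW where "WW y a b c = gauge_conn L h w y a b c" for y :: "real^4" and a b c
  have WW_eq: "WW y a b c = (\<Sum>mu\<in>UNIV. M y mu $ a $ b * matrix_inv (HH y) $ mu $ c)" for y a b c
    unfolding WW_def gauge_conn_def M_def dual_def gauge_coframe_def HH_def Linv by simp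
  have M_D: "M x mu = L x ** coord_conn h w x mu ** Li x + (if mu = 3 then g (x $ 3) else 0) *\<^sub>R l"
    if "x \<in> D" for x mu
  proof (cases "mu = 3")
    case True
    have "(\<chi> a b. \<Sum>d\<in>UNIV. L x $ a $ d * pd (\<lambda>y. Li y $ d $ b) mu x) = g (x $ 3) *\<^sub>R (L x ** (l ** Li x))"
      using True by (simp add: pdLi[OF that] vec_eq_iff matrix_matrix_mult_def sum_distrib_left mult_ac)
    also have "L x ** (l ** Li x) = l"
      by (simp add: matrix_mul_assoc Lc) (simp flip: matrix_mul_assoc add: LLi)
    finally show ?thesis using True by (simp add: M_def)
  next
    case False
    then show ?thesis by (simp add: M_def pdLi[OF that] vec_eq_iff)
  qed
  have slice_conv: "convex {s. chi_shift x0 s \<in> D}" if "x0 \<in> D" for x0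
    using D_slices that is_interval_convex by blast
  have sliceU: "x0 $ 3 + s \<in> U" if "chi_shift x0 s \<in> D" for x0 s
    using that unfolding U_def by (metis chi3 image_eqI)
  have dL: "mderiv (\<lambda>s. L (chi_shift x0 s)) ((- g (x0 $ 3 + s)) *\<^sub>R (l ** L (chi_shift x0 s))) s"
    if "chi_shift x0 s \<in> D" for x0 s
  proof -
    have "((\<lambda>s. x0 $ 3 + s) has_real_derivative 1) (at s)"
      by (auto intro!: derivative_eq_intros)
    from mderiv_chain[OF dLs[OF sliceU[OF that]] this]
    show ?thesis by (simp add: L_def chi3)
  qed
  have dLi: "mderiv (\<lambda>s. Li (chi_shift x0 s)) (g (x0 $ 3 + s) *\<^sub>R (l ** Li (chi_shift x0 s))) s"
    if "chi_shift x0 s \<in> D" for x0 s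
  proof -
    have "((\<lambda>s. x0 $ 3 + s) has_real_derivative 1) (at s)"
      by (auto intro!: derivative_eq_intros)
    from mderiv_chain[OF dLis[OF sliceU[OF that]] this]
    show ?thesis by (simp add: Li_def chi3)
  qed
  have pdh: "pd (\<lambda>y. h y $ a $ mu) 3 y = g (y $ 3) * (l ** h y) $ a $ mu" if "y \<in> D" for y a mu
    using arg_cong[OF lc0[OF that], of "\<lambda>X. X $ a $ mu"] by (simp add: lie_coframe_axis)
  have dh: "mderiv (\<lambda>s. h (chi_shift x0 s)) (g (x0 $ 3 + s) *\<^sub>R (l ** h (chi_shift x0 s))) s"
    if "chi_shift x0 s \<in> D" for x0 s
    unfolding mderiv_def
  proof (intro allI)
    fix a mu
    have "((\<lambda>s. h (chi_shift x0 s) $ a $ mu) has_real_derivative pd (\<lambda>y. h y $ a $ mu) 3 (chi_shift x0 s)) (at s)"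
      by (rule pd_shift[OF hd[OF that]])
    then show "((\<lambda>s. h (chi_shift x0 s) $ a $ mu) has_real_derivative (g (x0 $ 3 + s) *\<^sub>R (l ** h (chi_shift x0 s))) $ a $ mu) (at s)"
      by (simp add: pdh[OF that] chi3)
  qed
  have HH_const: "HH (chi_shift x0 t) = HH x0" if "x0 \<in> D" "chi_shift x0 t \<in> D" for x0 t
  proof -
    have "mderiv (\<lambda>s. HH (chi_shift x0 s)) 0 s" if "s \<in> {s. chi_shift x0 s \<in> D}" for s
    proof -
      have "mderiv (\<lambda>s. HH (chi_shift x0 s))
        ((- g (x0 $ 3 + s)) *\<^sub>R (l ** L (chi_shift x0 s)) ** h (chi_shift x0 s)
         + L (chi_shift x0 s) ** (g (x0 $ 3 + s) *\<^sub>R (l ** h (chi_shift x0 s)))) s"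
        unfolding HH_def using that by (intro mderiv_mult dL dh) auto
      moreover have "(- g (x0 $ 3 + s)) *\<^sub>R (l ** L (chi_shift x0 s)) ** h (chi_shift x0 s)
         + L (chi_shift x0 s) ** (g (x0 $ 3 + s) *\<^sub>R (l ** h (chi_shift x0 s))) = 0"
        by (simp only: mat_simps Lc) (simp add: algebra_simps)
      ultimately show ?thesis by simp
    qed
    from mderiv_zero_const[OF slice_conv[OF that(1)] this, of t 0] that
    show ?thesis by simp
  qed
  have cHH: "chi_indep D HH"
    unfolding chi_indep_def using HH_const by blast
  have etaOm: "transpose (eta ** coord_conn h w x mu) = - (eta ** coord_conn h w x mu)"
    if "x \<in> D" for x mu
  proof -
    have e: "(eta ** coord_conn h w x mu) $ a $ b = (\<Sum>c\<in>UNIV. lower w x a b c * h x $ c $ mu)" for a b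
    proof -
      have "(eta ** coord_conn h w x mu) $ a $ b = (\<Sum>e\<in>UNIV. \<Sum>c\<in>UNIV. eta $ a $ e * (w x e b c * h x $ c $ mu))"
        by (simp add: matrix_matrix_mult_def coord_conn_def sum_distrib_left)
      also have "\<dots> = (\<Sum>c\<in>UNIV. \<Sum>e\<in>UNIV. eta $ a $ e * (w x e b c * h x $ c $ mu))"
        by (rule sum.swap)
      also have "\<dots> = (\<Sum>c\<in>UNIV. lower w x a b c * h x $ c $ mu)"
        by (simp add: lower_def sum_distrib_right mult.assoc)
      finally show ?thesis .
    qed
    have lw: "lower w x a b c = - lower w x b a c" for a b c using w_metric that by blast
    have ab: "(eta ** coord_conn h w x mu) $ a $ b = - (eta ** coord_conn h w x mu) $ b $ a" for a b
      unfolding e by (simp add: lw[of a b] sum_negf)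
    have "transpose (eta ** coord_conn h w x mu) $ a $ b = (- (eta ** coord_conn h w x mu)) $ a $ b" for a b
      using ab[of b a] by (simp add: transpose_def)
    then show ?thesis
      by (simp add: vec_eq_iff)
  qed
  have etaL: "eta ** L y = transpose (Li y) ** eta" for y
  proof -
    have "transpose (L y) ** eta = (transpose (L y) ** eta ** L y) ** Li y"
      by (simp flip: matrix_mul_assoc add: LLi)
    also have "\<dots> = eta ** Li y" by (simp add: Lor)
    finally have "transpose (transpose (L y) ** eta) = transpose (eta ** Li y)" by simp
    then show ?thesis by (simp add: matrix_transpose_mul)
  qed
  have etaM: "transpose (eta ** M x mu) = - (eta ** M x mu)" if "x \<in> D" for x mu
  proof -
    have "eta ** M x mu = transpose (Li x) ** (eta ** coord_conn h w x mu) ** Li x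
        + (if mu = 3 then g (x $ 3) else 0) *\<^sub>R (eta ** l)"
      unfolding M_D[OF that] by (simp add: matrix_add_ldistrib matrix_scale_right matrix_mul_assoc etaL)
    moreover have "transpose (eta ** l) = - (eta ** l)" using la by (simp add: lorentz_alg_def)
    ultimately show ?thesis
      using congr_antisym[OF etaOm[OF that], of "Li x"]
      by (simp add: transpose_add transpose_scalar)
  qed
  have lowW: "lower WW x a b c = - lower WW x b a c" if "x \<in> D" for x a b c
    by (rule lower_antisym_gen[where W=WW and M="M x" and K="matrix_inv (HH x)"])
       (rule WW_eq, rule etaM[OF that])
  have M_const: "M (chi_shift x0 t) mu = M x0 mu" if "x0 \<in> D" "chi_shift x0 t \<in> D" for x0 t mu
  proof -
    define I where "I = {s. chi_shift x0 s \<in> D}"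
    have oI: "open I" unfolding I_def by (rule open_slice[OF D_open])
    have "mderiv (\<lambda>s. M (chi_shift x0 s) mu) 0 s" if sI: "s \<in> I" for s
    proof -
      define y where "y = chi_shift x0 s"
      have yD: "y \<in> D" using sI unfolding I_def y_def by simp
      define gv where "gv = g (y $ 3)"
      define gd where "gd = deriv g (y $ 3)"
      define k where "k = (if mu = 3 then gd else 0)"
      define Om where "Om = coord_conn h w y mu"
      define Om' where "Om' = (\<chi> a b. \<Sum>c\<in>UNIV. pd (\<lambda>y. w y a b c) 3 y * h y $ c $ mu + w y a b c * pd (\<lambda>y. h y $ c $ mu) 3 y)"
      have y3: "y $ 3 = x0 $ 3 + s" unfolding y_def by (rule chi3)
      have frd: "frame_deriv h (\<lambda>x. g (x $ 3)) c y = matrix_inv (h y) $ 3 $ c * gd" for c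
      proof -
        have "g differentiable (at (y $ 3))" using g_diff yD by blast
        from pd_fun3[OF this] have p: "pd (\<lambda>x. g (x $ 3)) mu y = (if mu = 3 then gd else 0)" for mu
          by (simp add: gd_def)
        have "(\<Sum>mu\<in>UNIV. matrix_inv (h y) $ mu $ c * (if mu = 3 then gd else 0))
            = (\<Sum>mu\<in>UNIV. if mu = 3 then matrix_inv (h y) $ mu $ c * gd else 0)"
          by (rule sum.cong) auto
        then show ?thesis
          by (simp add: frame_deriv_def dual_def p)
      qed
      have cn: "pd (\<lambda>y. w y a b c) 3 y = (\<Sum>d\<in>UNIV. gv * l$a$d * w y d b c)
        - (\<Sum>d\<in>UNIV. w y a d c * (gv * l$d$b)) - (\<Sum>d\<in>UNIV. w y a b d * (gv * l$d$c))
        - matrix_inv (h y) $ 3 $ c * gd * l$a$b" for a b c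
        using cn0[OF yD, of a b c] unfolding lie_conn_axis frd gv_def by simp
      have pdh': "pd (\<lambda>y. h y $ a $ mu) 3 y = gv * (l ** h y) $ a $ mu" for a mu
        using pdh[OF yD] gv_def by simp
      have OmE: "Om' = gv *\<^sub>R (l ** Om - Om ** l) - k *\<^sub>R l"
        unfolding Om'_def Om_def k_def
        by (rule key_conn[where h=h and w=w and y=y and gv=gv and gd=gd and l=l and mu=mu,
              OF h_inv[rule_format, OF yD] pdh' cn])
      have dOm: "mderiv (\<lambda>s. coord_conn h w (chi_shift x0 s) mu) Om' s"
        unfolding mderiv_def
      proof (intro allI)
        fix a b
        have "((\<lambda>s. \<Sum>c\<in>UNIV. w (chi_shift x0 s) a b c * h (chi_shift x0 s) $ c $ mu) has_real_derivative
            (\<Sum>c\<in>UNIV. pd (\<lambda>y. w y a b c) 3 y * h y $ c $ mu + w y a b c * pd (\<lambda>y. h y $ c $ mu) 3 y)) (at s)"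
        proof (rule DERIV_sum)
          fix c
          have d1: "((\<lambda>s. w (chi_shift x0 s) a b c) has_real_derivative pd (\<lambda>y. w y a b c) 3 y) (at s)"
            unfolding y_def by (rule pd_shift[OF wd]) (use yD y_def in simp)
          have d2: "((\<lambda>s. h (chi_shift x0 s) $ c $ mu) has_real_derivative pd (\<lambda>y. h y $ c $ mu) 3 y) (at s)"
            unfolding y_def by (rule pd_shift[OF hd]) (use yD y_def in simp)
          show "((\<lambda>s. w (chi_shift x0 s) a b c * h (chi_shift x0 s) $ c $ mu) has_real_derivative
            pd (\<lambda>y. w y a b c) 3 y * h y $ c $ mu + w y a b c * pd (\<lambda>y. h y $ c $ mu) 3 y) (at s)"
            using DERIV_mult'[OF d1 d2] by (simp add: y_def add.commute mult.commute)
        qed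
        then show "((\<lambda>s. coord_conn h w (chi_shift x0 s) mu $ a $ b) has_real_derivative Om' $ a $ b) (at s)"
          by (simp add: coord_conn_def Om'_def)
      qed
      have dK: "mderiv (\<lambda>s. (if mu = 3 then g (x0 $ 3 + s) else 0) *\<^sub>R l) (k *\<^sub>R l) s"
      proof (cases "mu = 3")
        case True
        have "((\<lambda>s. g (x0 $ 3 + s)) has_real_derivative gd) (at s)"
        proof -
          have "((\<lambda>s. x0 $ 3 + s) has_real_derivative 1) (at s)"
            by (auto intro!: derivative_eq_intros)
          from DERIV_chain2[OF gder[OF yD, unfolded y3] this] show ?thesis
            by (simp add: gd_def y3)
        qed
        from mderiv_scale[OF this mderiv_const[of l s]] show ?thesis
          using True by (simp add: k_def)
      next
        case False
        then show ?thesis using mderiv_const[of "0::real^4^4" s] by (simp add: k_def)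
      qed
      have B: "mderiv (\<lambda>s. L (chi_shift x0 s) ** coord_conn h w (chi_shift x0 s) mu ** Li (chi_shift x0 s)
              + (if mu = 3 then g (x0 $ 3 + s) else 0) *\<^sub>R l)
          ((((- gv) *\<^sub>R (l ** L y)) ** Om + L y ** Om') ** Li y + (L y ** Om) ** (gv *\<^sub>R (l ** Li y)) + k *\<^sub>R l) s"
        using mderiv_add[OF mderiv_mult[OF mderiv_mult[OF dL dOm] dLi] dK] yD
        by (simp add: y_def gv_def Om_def y3[unfolded y_def])
      have B0: "(((- gv) *\<^sub>R (l ** L y)) ** Om + L y ** Om') ** Li y + (L y ** Om) ** (gv *\<^sub>R (l ** Li y)) + k *\<^sub>R l = 0"
        by (rule zero_total[OF Lc LLi OmE])
      show ?thesis
      proof (rule mderiv_transform[OF _ oI sI])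
        show "mderiv (\<lambda>s. L (chi_shift x0 s) ** coord_conn h w (chi_shift x0 s) mu ** Li (chi_shift x0 s)
              + (if mu = 3 then g (x0 $ 3 + s) else 0) *\<^sub>R l) 0 s"
          using B B0 by simp
        fix s' assume "s' \<in> I"
        then have "chi_shift x0 s' \<in> D" unfolding I_def by simp
        then show "M (chi_shift x0 s') mu = L (chi_shift x0 s') ** coord_conn h w (chi_shift x0 s') mu ** Li (chi_shift x0 s')
              + (if mu = 3 then g (x0 $ 3 + s') else 0) *\<^sub>R l"
          by (simp add: M_D chi3)
      qed
    qed
    moreover have "0 \<in> I" "t \<in> I" using that unfolding I_def by auto
    ultimately show ?thesis
      using mderiv_zero_const[of I "\<lambda>s. M (chi_shift x0 s) mu" t 0] slice_conv[OF that(1)]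
      unfolding I_def by simp
  qed
  have cWW: "chi_indep D WW"
    unfolding chi_indep_def
  proof (intro ballI allI impI)
    fix x0 t assume "x0 \<in> D" "chi_shift x0 t \<in> D"
    then show "WW (chi_shift x0 t) = WW x0"
      by (simp add: fun_eq_iff WW_eq M_const HH_const)
  qed
  show ?thesis
  proof (intro exI conjI)
    show "\<forall>x\<in>D. lorentz_mat (L x)" using Lor by (simp add: lorentz_mat_def)
    show "\<forall>a b. (\<lambda>y. L y $ a $ b) differentiable_on D"
      using Ldiff by (auto intro: differentiable_at_imp_differentiable_on)
    show "(0::real) \<in> {0, 1}" by simp
    show "chi_indep D HH" by (rule cHH)
    show "chi_indep D WW" by (rule cWW)
    show "\<forall>x\<in>D. \<forall>a b c. lower WW x a b c = - lower WW x b a c" using lowW by blast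
    show "\<forall>x\<in>D. gauge_coframe L h x = HH x" by (simp add: gauge_coframe_def HH_def)
    show "\<forall>x\<in>D. \<forall>a b c. gauge_conn L h w x a b c = WW x a b c - frame_deriv HH (\<lambda>y. 0 * y $ 3) c x * l $ a $ b"
      by (simp add: WW_def frame_deriv_def)
  qed
qed

theorem mainTheorem4:
  fixes D :: "(real^4) set"
    and h :: "real^4 \<Rightarrow> real^4^4"
    and w :: "real^4 \<Rightarrow> 4 \<Rightarrow> 4 \<Rightarrow> 4 \<Rightarrow> real"
    and g :: "real \<Rightarrow> real"
    and l :: "real^4^4"
  assumes D_open: "open D"
    and D_slices: "\<forall>x\<in>D. is_interval {t. chi_shift x t \<in> D}"
    and h_inv: "\<forall>x\<in>D. invertible (h x)"
    and h_diff: "\<forall>a mu. (\<lambda>y. h y $ a $ mu) differentiable_on D"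
    and w_diff: "\<forall>a b c. (\<lambda>y. w y a b c) differentiable_on D"
    and w_metric: "\<forall>x\<in>D. \<forall>a b c. lower w x a b c = - lower w x b a c"
    and g_diff: "\<forall>x\<in>D. g differentiable (at (x $ 3))"
    and sym: "affine_frame_symmetry D h w (\<lambda>x. axis 3 1) (\<lambda>x. g (x $ 3)) l"
  shows
    "(\<exists>L H W (\<epsilon>::real).
        (\<forall>x\<in>D. lorentz_mat (L x))
      \<and> (\<forall>a b. (\<lambda>y. L y $ a $ b) differentiable_on D)
      \<and> \<epsilon> \<in> {0, 1}
      \<and> chi_indep D H \<and> chi_indep D W
      \<and> (\<forall>x\<in>D. \<forall>a b c. lower W x a b c = - lower W x b a c)
      \<and> (\<forall>x\<in>D. gauge_coframe L h x = H x)
      \<and> (\<forall>x\<in>D. \<forall>a b c. gauge_conn L h w x a b c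
             = W x a b c - frame_deriv H (\<lambda>y. \<epsilon> * y $ 3) c x * l $ a $ b))
   \<and> (\<forall>H W (\<epsilon>::real).
        (\<forall>x\<in>D. invertible (H x)) \<and> chi_indep D H \<and> chi_indep D W
        \<and> (\<forall>x\<in>D. \<forall>a b c. lower W x a b c = - lower W x b a c) \<and> \<epsilon> \<in> {0, 1}
        \<longrightarrow> (\<exists>f l'. affine_frame_symmetry D H
                (\<lambda>x a b c. W x a b c - frame_deriv H (\<lambda>y. \<epsilon> * y $ 3) c x * l $ a $ b)
                (\<lambda>x. axis 3 1) f l'))"
  apply (rule conjI)
   apply (rule forward_part[OF D_open D_slices h_inv h_diff w_diff w_metric g_diff sym])
  apply (intro allI impI)
  apply (rule converse_part[OF D_open])
   apply blast
  apply blast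
  done

end
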